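(* Let $X$ be a Polish space and $\mathcal{B}$ a countable base of its topology which is closed under finite intersections and contains $X$. The following are equivalent: (i) there is a monotone Borel hull operation on $\mathcal{M}$ with respect to $\mathcal{M}$; (ii) there is a $\mathcal{B}$-regular monotone Borel hull operation on $\mathcal{M}$ with respect to $\mathcal{M}$; (iii) there is a monotone Borel hull operation on $\mathtt{Baire}$ with respect to $\mathcal{M}$.
   Context: $\mathcal{M}$ is the $\sigma$-ideal of meager subsets of $X$, and $\mathtt{Baire}$ is the $\sigma$-algebra of subsets of $X$ with the Baire property. For a family $\mathcal{F}$ of subsets of $X$, a Borel hull operation on $\mathcal{F}$ with respect to $\mathcal{M}$ is a map $\psi$ from $\mathcal{F}$ to the Borel subsets of $X$ such that $A\subseteq\psi(A)$ and $\psi(A)\setminus A\in\mathcal{M}$ for every $A\in\mathcal{F}$. It is monotone if $\psi(A_1)\subseteq\psi(A_2)$ whenever $A_1\subseteq A_2$ are in $\mathcal{F}$. A monotone Borel hull operation $\varphi$ on $\mathcal{M}$ (so $\varphi(A)$ is a Borel meager set for each $A\in\mathcal{M}$) is $\mathcal{B}$-regular if $\varphi(A)\cap U\subseteq\varphi(A\cap U)$ for all $A\in\mathcal{M}$ and $U\in\mathcal{B}$. *)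

theory Defs
  imports "HOL-Analysis.Analysis"
begin

definition nowhere_dense :: "'a::topological_space set \<Rightarrow> bool" where
  "nowhere_dense A \<longleftrightarrow> interior (closure A) = {}"

definition meager_sets :: "'a::topological_space set set" where
  "meager_sets = {A. \<exists>F. countable F \<and> (\<forall>N\<in>F. nowhere_dense N) \<and> A \<subseteq> \<Union>F}"

definition baire_sets :: "'a::topological_space set set" where
  "baire_sets = {A. \<exists>U. open U \<and> (A - U) \<union> (U - A) \<in> meager_sets}"

definition borel_hull_op :: "'a::topological_space set set \<Rightarrow> 'a set set \<Rightarrow> ('a set \<Rightarrow> 'a set) \<Rightarrow> bool" where
  "borel_hull_op F I \<psi> \<longleftrightarrow>
     (\<forall>A\<in>F. \<psi> A \<in> sets borel \<and> A \<subseteq> \<psi> A \<and> \<psi> A - A \<in> I)"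

definition monotone_hull :: "'a set set \<Rightarrow> ('a set \<Rightarrow> 'a set) \<Rightarrow> bool" where
  "monotone_hull F \<psi> \<longleftrightarrow> (\<forall>A1\<in>F. \<forall>A2\<in>F. A1 \<subseteq> A2 \<longrightarrow> \<psi> A1 \<subseteq> \<psi> A2)"

definition regular_hull :: "'a::topological_space set set \<Rightarrow> ('a set \<Rightarrow> 'a set) \<Rightarrow> bool" where
  "regular_hull \<B> \<phi> \<longleftrightarrow> (\<forall>A\<in>meager_sets. \<forall>U\<in>\<B>. \<phi> A \<inter> U \<subseteq> \<phi> (A \<inter> U))"

end

theory Submission
  imports Defs
begin

lemma meager_setsI: "countable F \<Longrightarrow> \<forall>N\<in>F. nowhere_dense N \<Longrightarrow> A \<subseteq> \<Union>F \<Longrightarrow> A \<in> meager_sets"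
  unfolding meager_sets_def mem_Collect_eq by blast

lemma meager_setsD: "A \<in> meager_sets \<Longrightarrow> \<exists>F. countable F \<and> (\<forall>N\<in>F. nowhere_dense N) \<and> A \<subseteq> \<Union>F"
  unfolding meager_sets_def mem_Collect_eq by assumption

lemma meager_subset: "A \<in> meager_sets \<Longrightarrow> B \<subseteq> A \<Longrightarrow> B \<in> meager_sets"
  by (meson meager_setsD meager_setsI order_trans)

lemma meager_Union:
  assumes "countable \<A>" "\<And>A. A \<in> \<A> \<Longrightarrow> A \<in> meager_sets"
  shows "\<Union>\<A> \<in> meager_sets"
proof -
  have "\<forall>A\<in>\<A>. \<exists>F. countable F \<and> (\<forall>N\<in>F. nowhere_dense N) \<and> A \<subseteq> \<Union>F"
    using assms(2) meager_setsD by blast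
  then obtain G where G0: "\<forall>A\<in>\<A>. countable (G A) \<and> (\<forall>N\<in>G A. nowhere_dense N) \<and> A \<subseteq> \<Union>(G A)"
    by (rule bchoice[THEN exE]) 
  then have G: "\<And>A. A \<in> \<A> \<Longrightarrow> countable (G A) \<and> (\<forall>N\<in>G A. nowhere_dense N) \<and> A \<subseteq> \<Union>(G A)"
    by blast
  have c: "countable (\<Union>A\<in>\<A>. G A)" by (rule countable_UN[OF assms(1)]) (use G in blast)
  have n: "\<forall>N\<in>(\<Union>A\<in>\<A>. G A). nowhere_dense N" using G by blast
  have s: "\<Union>\<A> \<subseteq> \<Union>(\<Union>A\<in>\<A>. G A)"
  proof
    fix x assume "x \<in> \<Union>\<A>"
    then obtain A where "A \<in> \<A>" "x \<in> A" by blast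
    then have "x \<in> \<Union>(G A)" using G by blast
    then show "x \<in> \<Union>(\<Union>A\<in>\<A>. G A)" using \<open>A \<in> \<A>\<close> by blast
  qed
  show ?thesis using c n s by (rule meager_setsI)
qed

lemma meager_Un: assumes "A \<in> meager_sets" "B \<in> meager_sets" shows "A \<union> B \<in> meager_sets"
proof -
  have "\<Union>{A, B} \<in> meager_sets" by (rule meager_Union) (use assms in auto)
  then show ?thesis by simp
qed

lemma frontier_meager:
  assumes "open U" shows "closure U - U \<in> meager_sets"
proof -
  have c: "closed (closure U - U)" using assms by (simp add: closed_Diff)
  have "interior (closure U - U) \<inter> U = {}" using interior_subset by blast
  then have "interior (closure U - U) \<inter> closure U = {}" by (simp add: open_Int_closure_eq_empty)
  then have "interior (closure U - U) = {}" using interior_subset by blast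
  then have "interior (closure (closure U - U)) = {}" using c by (simp add: closure_closed)
  then have "nowhere_dense (closure U - U)" unfolding nowhere_dense_def .
  then show ?thesis by (intro meager_setsI[of "{closure U - U}"]) auto
qed

lemma meager_baire: "A \<in> meager_sets \<Longrightarrow> A \<in> baire_sets"
  unfolding baire_sets_def mem_Collect_eq by (rule exI[of _ "{}"]) simp

lemma make_regular:
  fixes \<B> :: "'a::topological_space set set" and \<phi> :: "'a set \<Rightarrow> 'a set"
  assumes cB: "countable \<B>" and bB: "topological_basis \<B>"
    and iB: "\<And>U V. U \<in> \<B> \<Longrightarrow> V \<in> \<B> \<Longrightarrow> U \<inter> V \<in> \<B>"
    and h: "borel_hull_op meager_sets meager_sets \<phi>" and m: "monotone_hull meager_sets \<phi>"
  shows "\<exists>\<phi>::'a set \<Rightarrow> 'a set. borel_hull_op meager_sets meager_sets \<phi> \<and> monotone_hull meager_sets \<phi>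
                     \<and> regular_hull \<B> \<phi>"
proof -
  define \<phi>' where "\<phi>' A = \<phi> A \<inter> (\<Inter>U\<in>\<B>. - U \<union> \<phi> (A \<inter> U))" for A :: "'a set"
  have sub: "A \<inter> U \<in> meager_sets" if "A \<in> meager_sets" for A U
    using meager_subset that by blast
  have "borel_hull_op meager_sets meager_sets \<phi>'"
    unfolding borel_hull_op_def
  proof (intro ballI conjI)
    fix A :: "'a set" assume A: "A \<in> meager_sets"
    have "(\<Inter>U\<in>\<B>. - U \<union> \<phi> (A \<inter> U)) \<in> sets borel"
    proof (rule sets.countable_INT'')
      show "UNIV \<in> sets borel" by simp
      show "countable \<B>" by fact
      fix U assume "U \<in> \<B>"
      then have "open U" using bB topological_basis_open by blast
      then have "- U \<in> sets borel" by (simp add: borel_closed)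
      moreover have "\<phi> (A \<inter> U) \<in> sets borel" using h sub[OF A] unfolding borel_hull_op_def by blast
      ultimately show "- U \<union> \<phi> (A \<inter> U) \<in> sets borel" by auto
    qed
    moreover have "\<phi> A \<in> sets borel" using h A unfolding borel_hull_op_def by blast
    ultimately show "\<phi>' A \<in> sets borel" unfolding \<phi>'_def by auto
    have "A \<inter> U \<subseteq> \<phi> (A \<inter> U)" for U using h sub[OF A] unfolding borel_hull_op_def by blast
    moreover have "A \<subseteq> \<phi> A" using h A unfolding borel_hull_op_def by blast
    ultimately show "A \<subseteq> \<phi>' A" unfolding \<phi>'_def by blast
    have "\<phi> A - A \<in> meager_sets" using h A unfolding borel_hull_op_def by blast
    then show "\<phi>' A - A \<in> meager_sets" by (rule meager_subset) (auto simp: \<phi>'_def)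
  qed
  moreover have "monotone_hull meager_sets \<phi>'"
    unfolding monotone_hull_def
  proof (intro ballI impI)
    fix A1 A2 :: "'a set" assume a: "A1 \<in> meager_sets" "A2 \<in> meager_sets" "A1 \<subseteq> A2"
    have "\<phi> A1 \<subseteq> \<phi> A2" using m a unfolding monotone_hull_def by blast
    moreover have "\<phi> (A1 \<inter> U) \<subseteq> \<phi> (A2 \<inter> U)" for U
      using m a sub unfolding monotone_hull_def by (meson Int_mono order_refl)
    ultimately show "\<phi>' A1 \<subseteq> \<phi>' A2" unfolding \<phi>'_def by blast
  qed
  moreover have "regular_hull \<B> \<phi>'"
    unfolding regular_hull_def
  proof (intro ballI subsetI)
    fix A V x assume A: "A \<in> meager_sets" and V: "V \<in> \<B>" and x: "x \<in> \<phi>' A \<inter> V"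
    have "x \<in> \<phi> (A \<inter> V)" using x V unfolding \<phi>'_def by blast
    moreover have "x \<in> - U \<union> \<phi> (A \<inter> V \<inter> U)" if U: "U \<in> \<B>" for U
    proof (cases "x \<in> U")
      case True
      have "V \<inter> U \<in> \<B>" using iB V U by blast
      then have "x \<in> \<phi> (A \<inter> (V \<inter> U))" using x True unfolding \<phi>'_def by blast
      then show ?thesis by (simp add: Int_assoc)
    qed auto
    ultimately show "x \<in> \<phi>' (A \<inter> V)" unfolding \<phi>'_def by blast
  qed
  ultimately show ?thesis by blast
qed

lemma make_baire:
  fixes \<B> :: "'a::topological_space set set" and \<phi> :: "'a set \<Rightarrow> 'a set"
  assumes cB: "countable \<B>" and bB: "topological_basis \<B>"
    and h: "borel_hull_op meager_sets meager_sets \<phi>" and m: "monotone_hull meager_sets \<phi>"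
    and r: "regular_hull \<B> \<phi>"
  shows "\<exists>\<psi>::'a set \<Rightarrow> 'a set. borel_hull_op baire_sets meager_sets \<psi> \<and> monotone_hull baire_sets \<psi>"
proof -
  define W where "W A = \<Union>{V\<in>\<B>. V - A \<in> meager_sets}" for A
  have Wopen: "open (W A)" for A unfolding W_def using bB topological_basis_open by blast
  have Wmono: "W A1 \<subseteq> W A2" if "A1 \<subseteq> A2" for A1 A2
  proof -
    have "V - A2 \<in> meager_sets" if "V - A1 \<in> meager_sets" for V
      using meager_subset[OF that] \<open>A1 \<subseteq> A2\<close> by blast
    then show ?thesis unfolding W_def by (intro Union_mono) blast
  qed
  have WA: "W A - A \<in> meager_sets" for A
  proof -
    have "W A - A = \<Union>((\<lambda>V. V - A) ` {V\<in>\<B>. V - A \<in> meager_sets})" unfolding W_def by blast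
    also have "\<dots> \<in> meager_sets"
    proof (rule meager_Union)
      show "countable ((\<lambda>V. V - A) ` {V\<in>\<B>. V - A \<in> meager_sets})"
        by (rule countable_image, rule countable_subset[OF _ cB]) blast
    qed blast
    finally show ?thesis .
  qed
  have AW: "A - W A \<in> meager_sets" if Ab: "A \<in> baire_sets" for A
  proof -
    obtain Q where O: "open Q" "(A - Q) \<union> (Q - A) \<in> meager_sets"
      using Ab unfolding baire_sets_def mem_Collect_eq by blast
    have "Q \<subseteq> W A"
    proof
      fix x assume "x \<in> Q"
      then obtain V where V: "V \<in> \<B>" "x \<in> V" "V \<subseteq> Q" using topological_basisE[OF bB O(1)] by blast
      have "V - A \<subseteq> (A - Q) \<union> (Q - A)" using V(3) by blast
      then have "V - A \<in> meager_sets" by (rule meager_subset[OF O(2)])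
      then show "x \<in> W A" using V unfolding W_def by blast
    qed
    then have "A - W A \<subseteq> (A - Q) \<union> (Q - A)" by blast
    then show ?thesis by (rule meager_subset[OF O(2)])
  qed
  define \<psi> where "\<psi> A = closure (W A) \<union> \<phi> (A - W A)" for A
  have hb: "\<phi> M \<in> sets borel \<and> M \<subseteq> \<phi> M \<and> \<phi> M - M \<in> meager_sets" if "M \<in> meager_sets" for M
    using h that unfolding borel_hull_op_def by blast
  have "borel_hull_op baire_sets meager_sets \<psi>"
    unfolding borel_hull_op_def
  proof (intro ballI conjI)
    fix A :: "'a set" assume A: "A \<in> baire_sets"
    note H = hb[OF AW[OF A]]
    show "\<psi> A \<in> sets borel" unfolding \<psi>_def using H by (auto simp: borel_closed)
    show "A \<subseteq> \<psi> A" unfolding \<psi>_def using H closure_subset[of "W A"] by blast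
    have "\<psi> A - A \<subseteq> (closure (W A) - W A) \<union> (W A - A) \<union> (\<phi> (A - W A) - (A - W A))"
      unfolding \<psi>_def by blast
    moreover have "(closure (W A) - W A) \<union> (W A - A) \<union> (\<phi> (A - W A) - (A - W A)) \<in> meager_sets"
      using H WA frontier_meager[OF Wopen] by (intro meager_Un) auto
    ultimately show "\<psi> A - A \<in> meager_sets" by (rule meager_subset[rotated])
  qed
  moreover have "monotone_hull baire_sets \<psi>"
    unfolding monotone_hull_def
  proof (intro ballI impI subsetI)
    fix A1 A2 x assume a: "A1 \<in> baire_sets" "A2 \<in> baire_sets" "A1 \<subseteq> A2" and x: "x \<in> \<psi> A1"
    have cl: "closure (W A1) \<subseteq> closure (W A2)" using Wmono[OF a(3)] by (rule closure_mono)
    show "x \<in> \<psi> A2"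
    proof (cases "x \<in> closure (W A2)")
      case True then show ?thesis unfolding \<psi>_def by blast
    next
      case False
      then have x1: "x \<in> \<phi> (A1 - W A1)" using x cl unfolding \<psi>_def by blast
      obtain V where V: "V \<in> \<B>" "x \<in> V" "V \<subseteq> - closure (W A2)"
      proof -
        have o: "open (- closure (W A2))" by auto
        have "x \<in> - closure (W A2)" using False by simp
        then show ?thesis using topological_basisE[OF bB o] that by blast
      qed
      have M1: "A1 - W A1 \<in> meager_sets" using AW[OF a(1)] .
      have "\<phi> (A1 - W A1) \<inter> V \<subseteq> \<phi> ((A1 - W A1) \<inter> V)" using r M1 V(1) unfolding regular_hull_def by blast
      then have "x \<in> \<phi> ((A1 - W A1) \<inter> V)" using V(2) x1 by blast
      moreover have "(A1 - W A1) \<inter> V \<subseteq> A2 - W A2" using V a(3) closure_subset by blast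
      moreover have "(A1 - W A1) \<inter> V \<in> meager_sets" using M1 by (rule meager_subset) blast
      ultimately have "x \<in> \<phi> (A2 - W A2)" using m AW[OF a(2)] unfolding monotone_hull_def by (meson subsetD)
      then show ?thesis unfolding \<psi>_def by blast
    qed
  qed
  ultimately show ?thesis by (intro exI[of _ \<psi>] conjI)
qed

theorem theorem3p2:
  fixes \<B> :: "'a::polish_space set set"
  assumes "countable \<B>" and "topological_basis \<B>"
    and "\<And>U V. U \<in> \<B> \<Longrightarrow> V \<in> \<B> \<Longrightarrow> U \<inter> V \<in> \<B>"
    and "UNIV \<in> \<B>"
  shows "((\<exists>\<phi>::'a set \<Rightarrow> 'a set. borel_hull_op meager_sets meager_sets \<phi> \<and> monotone_hull meager_sets \<phi>)
           \<longleftrightarrow> (\<exists>\<phi>::'a set \<Rightarrow> 'a set. borel_hull_op meager_sets meager_sets \<phi> \<and> monotone_hull meager_sets \<phi>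
                     \<and> regular_hull \<B> \<phi>))
       \<and> ((\<exists>\<phi>::'a set \<Rightarrow> 'a set. borel_hull_op meager_sets meager_sets \<phi> \<and> monotone_hull meager_sets \<phi>)
           \<longleftrightarrow> (\<exists>\<psi>::'a set \<Rightarrow> 'a set. borel_hull_op baire_sets meager_sets \<psi> \<and> monotone_hull baire_sets \<psi>))"
proof (intro conjI iffI)
  show "\<exists>\<phi>. borel_hull_op meager_sets meager_sets \<phi> \<and> monotone_hull meager_sets \<phi> \<and> regular_hull \<B> \<phi>"
    if "\<exists>\<phi>::'a set \<Rightarrow> 'a set. borel_hull_op meager_sets meager_sets \<phi> \<and> monotone_hull meager_sets \<phi>"
    using that make_regular[OF assms(1,2,3)] by blast
  show "\<exists>\<phi>::'a set \<Rightarrow> 'a set. borel_hull_op meager_sets meager_sets \<phi> \<and> monotone_hull meager_sets \<phi>"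
    if "\<exists>\<phi>. borel_hull_op meager_sets meager_sets \<phi> \<and> monotone_hull meager_sets \<phi> \<and> regular_hull \<B> \<phi>"
    using that by blast
  show "\<exists>\<psi>::'a set \<Rightarrow> 'a set. borel_hull_op baire_sets meager_sets \<psi> \<and> monotone_hull baire_sets \<psi>"
    if "\<exists>\<phi>::'a set \<Rightarrow> 'a set. borel_hull_op meager_sets meager_sets \<phi> \<and> monotone_hull meager_sets \<phi>"
    using that make_regular[OF assms(1,2,3)] make_baire[OF assms(1,2)] by blast
  show "\<exists>\<phi>::'a set \<Rightarrow> 'a set. borel_hull_op meager_sets meager_sets \<phi> \<and> monotone_hull meager_sets \<phi>"
    if ex: "\<exists>\<psi>::'a set \<Rightarrow> 'a set. borel_hull_op baire_sets meager_sets \<psi> \<and> monotone_hull baire_sets \<psi>"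
  proof -
    obtain \<psi> :: "'a set \<Rightarrow> 'a set" where p: "borel_hull_op baire_sets meager_sets \<psi>" "monotone_hull baire_sets \<psi>"
      using ex by blast
    have "borel_hull_op meager_sets meager_sets \<psi>" using p(1) meager_baire
      unfolding borel_hull_op_def by blast
    moreover have "monotone_hull meager_sets \<psi>" using p(2) meager_baire
      unfolding monotone_hull_def by blast
    ultimately show ?thesis by blast
  qed
qed

end
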